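(* Let $L\ge2$ and let $S=(d,N_1,\dots,N_L)$ be a neural network architecture. Let $\varrho:\mathbb{R}\to\mathbb{R}$ be continuous and assume there is $x_0\in\mathbb{R}$ such that $\varrho$ is differentiable at $x_0$ with $\varrho'(x_0)\ne0$. Let $\Omega\subset\mathbb{R}^d$ have nonempty interior, and assume that $\mathcal{RNN}_\varrho^\Omega(S)$ does not contain infinitely many linearly independent functions. Then $\varrho$ is a polynomial.
   Context: A neural network with architecture $S=(N_0,\dots,N_L)$ ($N_0=d$) is a family $\Phi=((A_\ell,b_\ell))_{\ell=1}^L$, $A_\ell\in\mathbb{R}^{N_\ell\times N_{\ell-1}}$, $b_\ell\in\mathbb{R}^{N_\ell}$; $\mathcal{NN}(S)$ is the set of these. $\mathrm{R}_\varrho^\Omega(\Phi):\Omega\to\mathbb{R}^{N_L}$, $x\mapsto x_L$, where $x_0=x$, $x_\ell=\varrho(A_\ell x_{\ell-1}+b_\ell)$ for $1\le\ell\le L-1$ (componentwise), $x_L=A_Lx_{L-1}+b_L$; $\mathcal{RNN}_\varrho^\Omega(S)=\{\mathrm{R}_\varrho^\Omega(\Phi):\Phi\in\mathcal{NN}(S)\}$. *)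

theory Defs
  imports "HOL-Analysis.Analysis" "HOL-Computational_Algebra.Polynomial"
begin

text \<open>Architecture S = (d, N_1, ..., N_L): the input dimension d is CARD('d) of the
index type of the input space real^'d; Ns = [N_1, ..., N_L], so L = length Ns.
A network is (A_1, b_1, rest) where A_1 :: nat => 'd => real (rows j < N_1),
b_1 :: nat => real, and rest = [(A_2,b_2), ..., (A_L,b_L)] with matrices
indexed nat => nat => real (only entries j < N_l, i < N_(l-1) are used).
Vectors in R^N are represented as nat => real, set to 0 at indices >= N.\<close>

type_synonym 'd network =
  "(nat \<Rightarrow> 'd \<Rightarrow> real) \<times> (nat \<Rightarrow> real) \<times> ((nat \<Rightarrow> nat \<Rightarrow> real) \<times> (nat \<Rightarrow> real)) list"

definition NN :: "nat list \<Rightarrow> ('d::finite) network set" where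
  "NN Ns = {(A1, b1, Phis). length Phis = length Ns - 1}"

text \<open>net_rest rho dims layers z: z is the pre-activation of the current layer,
whose width is the head of dims.\<close>
fun net_rest :: "(real \<Rightarrow> real) \<Rightarrow> nat list \<Rightarrow> ((nat \<Rightarrow> nat \<Rightarrow> real) \<times> (nat \<Rightarrow> real)) list
                  \<Rightarrow> (nat \<Rightarrow> real) \<Rightarrow> (nat \<Rightarrow> real)" where
  "net_rest rho [n] [] z = (\<lambda>j. if j < n then z j else 0)"
| "net_rest rho (n # m # ns) ((A, b) # Phis) z =
     net_rest rho (m # ns) Phis (\<lambda>j. if j < m then (\<Sum>i<n. A j i * rho (z i)) + b j else 0)"
| "net_rest rho _ _ z = (\<lambda>_. 0)"

definition realization :: "(real \<Rightarrow> real) \<Rightarrow> nat list \<Rightarrow> ('d::finite) network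
                            \<Rightarrow> real^'d \<Rightarrow> (nat \<Rightarrow> real)" where
  "realization rho Ns Phi x =
     (case Phi of (A1, b1, Phis) \<Rightarrow>
        net_rest rho Ns Phis
          (\<lambda>j. if j < hd Ns then (\<Sum>i\<in>UNIV. A1 j i * x $ i) + b1 j else 0))"

definition RNN :: "(real \<Rightarrow> real) \<Rightarrow> (real^'d) set \<Rightarrow> nat list
                     \<Rightarrow> (real^('d::finite) \<Rightarrow> (nat \<Rightarrow> real)) set" where
  "RNN rho \<Omega> Ns = {(\<lambda>x. if x \<in> \<Omega> then realization rho Ns Phi x else (\<lambda>_. 0)) | Phi. Phi \<in> NN Ns}"

definition lin_indep_on :: "'a set \<Rightarrow> ('a \<Rightarrow> nat \<Rightarrow> real) set \<Rightarrow> bool" where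
  "lin_indep_on \<Omega> F \<longleftrightarrow>
     (\<forall>G c. finite G \<and> G \<subseteq> F \<and> (\<forall>x\<in>\<Omega>. \<forall>j. (\<Sum>g\<in>G. c g * g x j) = 0)
            \<longrightarrow> (\<forall>g\<in>G. c g = 0))"

end

theory Submission
  imports Defs "HOL-Analysis.Analysis" "HOL-Computational_Algebra.Polynomial" "HOL-Library.Function_Algebras"
begin

lemma antideriv_exists:
  fixes f :: "real \<Rightarrow> real"
  assumes cf: "continuous_on UNIV f"
  shows "\<exists>F. \<forall>x. (F has_real_derivative f x) (at x)"
proof -
  define F where "F x = integral {0..x} f - integral {x..0} f" for x
  have int: "f integrable_on {a..b}" for a b
    by (rule integrable_continuous_real) (use cf continuous_on_subset in blast)
  have Feq: "F u = integral {a..u} f - integral {a..0} f" if "a \<le> u" "a \<le> 0" for a u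
  proof (cases "0 \<le> u")
    case True
    have "integral {a..0} f + integral {0..u} f = integral {a..u} f"
      by (rule Henstock_Kurzweil_Integration.integral_combine) (use that True int in auto)
    moreover have "integral {u..0} f = 0"
      using True by (cases "u = 0") auto
    ultimately show ?thesis unfolding F_def by linarith
  next
    case False
    have "integral {a..u} f + integral {u..0} f = integral {a..0} f"
      by (rule Henstock_Kurzweil_Integration.integral_combine) (use that False int in auto)
    moreover have "integral {0..u} f = 0"
      using False by auto
    ultimately show ?thesis unfolding F_def by linarith
  qed
  show ?thesis
  proof (intro exI allI)
    fix x :: real
    define a where "a = min x 0 - 1"
    have "((\<lambda>u. integral {a..u} f) has_real_derivative f x) (at x within {a..x+1})"
      by (rule integral_has_real_derivative) (use cf continuous_on_subset a_def in auto)
    moreover have "x \<in> interior {a..x+1}" using a_def by auto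
    ultimately have "((\<lambda>u. integral {a..u} f) has_real_derivative f x) (at x)"
      by (simp only: at_within_interior)
    then have "((\<lambda>u. integral {a..u} f - integral {a..0} f) has_real_derivative f x) (at x)"
      by (auto intro!: derivative_eq_intros)
    then show "(F has_real_derivative f x) (at x)"
      by (rule has_field_derivative_transform_within_open[where S="{a<..}"])
         (auto simp: a_def intro!: Feq[symmetric])
  qed
qed

definition Sop :: "real set \<Rightarrow> (real \<Rightarrow> real) \<Rightarrow> real \<Rightarrow> (real \<Rightarrow> real) \<Rightarrow> real \<Rightarrow> real" where
  "Sop L c t0 g y = - (1 / c t0) * (\<Sum>t\<in>L-{t0}. c t / (t - t0) * (g (y + (t - t0)) - g y))"

lemma smooth_step:
  fixes f c :: "real \<Rightarrow> real"
  assumes fin: "finite L" and t0: "t0 \<in> L" and c0: "c t0 \<noteq> 0"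
    and cf: "continuous_on UNIV f"
    and rel: "\<forall>a b. (\<Sum>t\<in>L. c t * f (a*t+b)) = 0"
  shows "(f has_real_derivative Sop L c t0 f y) (at y)"
proof -
  obtain F where F: "\<And>x. (F has_real_derivative f x) (at x)"
    using antideriv_exists[OF cf] by blast
  define r where "r y = - (1 / c t0) * (\<Sum>t\<in>L-{t0}. c t / (t - t0) * (F (y + (t - t0)) - F y))" for y
  have key: "f y = r y" for y
  proof -
    define I where "I t = (if t = t0 then f y else (F (y + (t - t0)) - F y) / (t - t0))" for t
    have hi: "((\<lambda>a. c t * f (y + a * (t - t0))) has_integral c t * I t) {0..1}" if "t \<in> L" for t
    proof (cases "t = t0")
      case True
      then show ?thesis using has_integral_const_real[of "c t * f y" 0 1] by (simp add: I_def)
    next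
      case False
      have d: "((\<lambda>a. F (y + a * (t - t0)) / (t - t0)) has_vector_derivative f (y + a * (t - t0))) (at a within {0..1})" for a
      proof -
        have "((\<lambda>a. F (y + a * (t - t0))) has_real_derivative f (y + a * (t - t0)) * (t - t0)) (at a)"
          by (rule DERIV_chain2[OF F]) (auto intro!: derivative_eq_intros)
        then have "((\<lambda>a. F (y + a * (t - t0)) / (t - t0)) has_real_derivative f (y + a * (t - t0)) * (t - t0) / (t - t0)) (at a)"
          by (rule DERIV_cdivide)
        then have "((\<lambda>a. F (y + a * (t - t0)) / (t - t0)) has_real_derivative f (y + a * (t - t0))) (at a)"
          using False by simp
        then show ?thesis
          by (simp add: has_real_derivative_iff_has_vector_derivative has_vector_derivative_at_within)
      qed
      have "((\<lambda>a. f (y + a * (t - t0))) has_integral (F (y + 1 * (t - t0)) / (t - t0) - F (y + 0 * (t - t0)) / (t - t0))) {0..1}"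
        by (rule fundamental_theorem_of_calculus) (use d in auto)
      then have "((\<lambda>a. f (y + a * (t - t0))) has_integral I t) {0..1}"
        using False by (simp add: I_def diff_divide_distrib)
      then show ?thesis by (rule has_integral_mult_right)
    qed
    have "((\<lambda>a. \<Sum>t\<in>L. c t * f (y + a * (t - t0))) has_integral (\<Sum>t\<in>L. c t * I t)) {0..1}"
      by (rule has_integral_sum[OF fin hi])
    moreover have "(\<lambda>a. \<Sum>t\<in>L. c t * f (y + a * (t - t0))) = (\<lambda>a. 0)"
    proof
      fix a
      have "(\<Sum>t\<in>L. c t * f (a * t + (y - a * t0))) = 0" using rel by blast
      moreover have "a * t + (y - a * t0) = y + a * (t - t0)" for t by (simp add: algebra_simps)
      ultimately show "(\<Sum>t\<in>L. c t * f (y + a * (t - t0))) = 0" by simp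
    qed
    ultimately have s0: "(\<Sum>t\<in>L. c t * I t) = 0" by simp
    have "(\<Sum>t\<in>L. c t * I t) = c t * I t0 + (\<Sum>t\<in>L-{t0}. c t * I t)" if "t = t0" for t
      using sum.remove[OF fin t0, of "\<lambda>t. c t * I t"] that by simp
    then have s1: "(\<Sum>t\<in>L. c t * I t) = c t0 * f y + (\<Sum>t\<in>L-{t0}. c t * I t)"
      by (simp add: I_def)
    have s2: "(\<Sum>t\<in>L-{t0}. c t * I t) = (\<Sum>t\<in>L-{t0}. c t / (t - t0) * (F (y + (t - t0)) - F y))"
      by (rule sum.cong) (auto simp: I_def)
    show ?thesis using s0 s1 s2 c0 unfolding r_def by (simp add: field_simps)
  qed
  have fr: "f = r" using key by auto
  have Fs: "((\<lambda>y. F (y + d)) has_real_derivative f (y + d)) (at y)" for d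
  proof -
    have "((\<lambda>y. y + d) has_real_derivative 1) (at y)" by (auto intro!: derivative_eq_intros)
    from DERIV_chain2[OF F this] show ?thesis by simp
  qed
  have "((\<lambda>y. \<Sum>t\<in>L-{t0}. c t / (t - t0) * (F (y + (t - t0)) - F y)) has_real_derivative
        (\<Sum>t\<in>L-{t0}. c t / (t - t0) * (f (y + (t - t0)) - f y))) (at y)"
    by (intro DERIV_sum DERIV_cmult DERIV_diff Fs F)
  then have "(r has_real_derivative Sop L c t0 f y) (at y)"
    unfolding r_def Sop_def by (intro DERIV_cmult)
  then show ?thesis using fr by simp
qed

definition goodf :: "real set \<Rightarrow> (real \<Rightarrow> real) \<Rightarrow> (real \<Rightarrow> real) \<Rightarrow> bool" where
  "goodf L c g \<longleftrightarrow> continuous_on UNIV g \<and> (\<forall>a b. (\<Sum>t\<in>L. c t * g (a*t+b)) = 0)"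

lemma Sop_good:
  assumes fin: "finite L" and g: "goodf L c g"
  shows "goodf L c (Sop L c t0 g)"
proof -
  have cg: "continuous_on UNIV g" and rel: "\<And>a b. (\<Sum>t\<in>L. c t * g (a*t+b)) = 0"
    using g unfolding goodf_def by auto
  have cgd: "continuous_on UNIV (\<lambda>y. g (y + d))" for d
    by (rule continuous_on_compose2[OF cg]) (auto intro!: continuous_intros)
  have cont: "continuous_on UNIV (Sop L c t0 g)"
    unfolding Sop_def by (intro continuous_intros cgd cg)
  have "(\<Sum>t\<in>L. c t * Sop L c t0 g (a*t+b)) = 0" for a b
  proof -
    define w where "w s = c s / (s - t0)" for s
    have inner: "(\<Sum>t\<in>L. c t * (w s * (g (a*t+b + (s - t0)) - g (a*t+b)))) =
        w s * ((\<Sum>t\<in>L. c t * g (a*t + (b + (s - t0)))) - (\<Sum>t\<in>L. c t * g (a*t+b)))" for s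
      by (simp add: sum_distrib_left sum_subtractf right_diff_distrib add.assoc mult.left_commute)
    have "(\<Sum>t\<in>L. c t * Sop L c t0 g (a*t+b)) =
       -(1 / c t0) * (\<Sum>t\<in>L. \<Sum>s\<in>L-{t0}. c t * (w s * (g (a*t+b + (s - t0)) - g (a*t+b))))"
      unfolding Sop_def w_def by (simp add: sum_distrib_left mult.left_commute)
    also have "\<dots> = -(1 / c t0) * (\<Sum>s\<in>L-{t0}. \<Sum>t\<in>L. c t * (w s * (g (a*t+b + (s - t0)) - g (a*t+b))))"
      by (subst sum.swap) (rule refl)
    also have "\<dots> = 0" by (simp add: inner rel)
    finally show ?thesis .
  qed
  then show ?thesis using cont unfolding goodf_def by blast
qed

lemma iter_good:
  assumes fin: "finite L" and g: "goodf L c g"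
  shows "goodf L c ((Sop L c t0 ^^ m) g)"
  by (induction m) (simp_all add: g Sop_good[OF fin])

lemma moments:
  fixes D :: "nat \<Rightarrow> real \<Rightarrow> real"
  assumes fin: "finite L"
    and good: "\<And>m. goodf L c (D m)"
    and der: "\<And>m y. (D m has_real_derivative D (Suc m) y) (at y)"
  shows "j \<le> m \<Longrightarrow> (\<Sum>t\<in>L. c t * t^j * D m (a*t+b)) = 0"
proof (induction j arbitrary: m a b)
  case 0
  then show ?case using good[of m] unfolding goodf_def by simp
next
  case (Suc j)
  then obtain m' where m: "m = Suc m'" and jm: "j \<le> m'" by (cases m) auto
  define H where "H a = (\<Sum>t\<in>L. c t * t^j * D m' (a*t+b))" for a
  have H0: "H = (\<lambda>_. 0)" using Suc.IH[OF jm] unfolding H_def by auto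
  have "(H has_real_derivative (\<Sum>t\<in>L. c t * t^j * (D m (a*t+b) * t))) (at a)"
    unfolding H_def m
  proof (intro DERIV_sum DERIV_cmult)
    fix t
    have "((\<lambda>a. a*t+b) has_real_derivative t) (at a)" by (auto intro!: derivative_eq_intros)
    from DERIV_chain2[OF der this] show "((\<lambda>a. D m' (a*t+b)) has_real_derivative D (Suc m') (a*t+b) * t) (at a)" .
  qed
  moreover have "(H has_real_derivative 0) (at a)" unfolding H0 by (rule DERIV_const)
  ultimately have "(\<Sum>t\<in>L. c t * t^j * (D m (a*t+b) * t)) = 0" by (rule DERIV_unique)
  then show ?case by (simp add: algebra_simps)
qed

lemma core_poly:
  fixes f c :: "real \<Rightarrow> real"
  assumes fin: "finite L" and t0: "t0 \<in> L" and c0: "c t0 \<noteq> 0"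
    and cf: "continuous_on UNIV f"
    and rel: "\<forall>a b. (\<Sum>t\<in>L. c t * f (a*t+b)) = 0"
  shows "\<exists>p :: real poly. \<forall>x. f x = poly p x"
proof -
  define D where "D m = (Sop L c t0 ^^ m) f" for m
  have gf: "goodf L c f" using cf rel unfolding goodf_def by blast
  have good: "goodf L c (D m)" for m unfolding D_def by (rule iter_good[OF fin gf])
  have der: "(D m has_real_derivative D (Suc m) y) (at y)" for m y
  proof -
    have "(D m has_real_derivative Sop L c t0 (D m) y) (at y)"
      using good[of m] smooth_step[of L t0 c "D m" y] fin t0 c0 unfolding goodf_def by blast
    then show ?thesis unfolding D_def by simp
  qed
  define q :: "real poly" where "q = (\<Prod>s\<in>L-{t0}. [:-s, 1:])"
  have pq: "poly q x = (\<Prod>s\<in>L-{t0}. x - s)" for x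
    unfolding q_def by (simp add: poly_prod)
  define M where "M = degree q"
  have "(\<Sum>t\<in>L. c t * poly q t) = c t0 * poly q t0 + (\<Sum>t\<in>L-{t0}. c t * poly q t)"
    using sum.remove[OF fin t0] by blast
  also have "(\<Sum>t\<in>L-{t0}. c t * poly q t) = 0"
    by (rule sum.neutral) (use fin in \<open>auto simp: pq\<close>)
  finally have s1: "(\<Sum>t\<in>L. c t * poly q t) = c t0 * poly q t0" by simp
  have "poly q t0 \<noteq> 0" using fin by (simp add: pq)
  with c0 s1 have nz: "(\<Sum>t\<in>L. c t * poly q t) \<noteq> 0" by simp
  have "(\<Sum>t\<in>L. c t * poly q t) = (\<Sum>t\<in>L. \<Sum>i\<le>M. coeff q i * (c t * t^i))"
    unfolding M_def poly_altdef by (simp add: sum_distrib_left mult_ac)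
  also have "\<dots> = (\<Sum>i\<le>M. \<Sum>t\<in>L. coeff q i * (c t * t^i))" by (rule sum.swap)
  also have "\<dots> = (\<Sum>j\<le>M. coeff q j * (\<Sum>t\<in>L. c t * t^j))" by (simp add: sum_distrib_left)
  finally have eq: "(\<Sum>t\<in>L. c t * poly q t) = (\<Sum>j\<le>M. coeff q j * (\<Sum>t\<in>L. c t * t^j))" .
  obtain j where j: "j \<le> M" "(\<Sum>t\<in>L. c t * t^j) \<noteq> 0"
  proof -
    { assume "\<forall>j\<le>M. (\<Sum>t\<in>L. c t * t^j) = 0"
      then have "(\<Sum>j\<le>M. coeff q j * (\<Sum>t\<in>L. c t * t^j)) = 0" by simp
      with eq nz have False by simp }
    then show ?thesis using that by blast
  qed
  have DM: "D M b = 0" for b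
  proof -
    have "(\<Sum>t\<in>L. c t * t^j * D M (0*t+b)) = 0"
      by (rule moments[of L c D, OF fin good der]) (use j in auto)
    then have "(\<Sum>t\<in>L. c t * t^j) * D M b = 0"
      by (simp add: sum_distrib_right)
    with j show ?thesis by simp
  qed
  define p :: "real poly" where "p = (\<Sum>m<M. monom (D m 0 / fact m) m)"
  have "f x = poly p x" for x
  proof -
    obtain t where "f x = (\<Sum>m<M. (D m 0 / fact m) * x ^ m) + (D M t / fact M) * x ^ M"
      using Maclaurin_all_le[of D f x M] der D_def by auto
    then show ?thesis unfolding p_def by (simp add: DM poly_sum poly_monom)
  qed
  then show ?thesis by blast
qed


fun nchain :: "(real \<Rightarrow> real) \<Rightarrow> (real \<times> real) list \<Rightarrow> real \<Rightarrow> real" where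
  "nchain rho [] v = v"
| "nchain rho ((a,b)#ps) v = nchain rho ps (a * rho v + b)"

definition mat1 :: "real \<Rightarrow> nat \<Rightarrow> nat \<Rightarrow> real" where
  "mat1 a = (\<lambda>j i. if j = 0 \<and> i = 0 then a else 0)"
definition vec1 :: "real \<Rightarrow> nat \<Rightarrow> real" where
  "vec1 b = (\<lambda>j. if j = 0 then b else 0)"
definition layers :: "(real \<times> real) list \<Rightarrow> ((nat \<Rightarrow> nat \<Rightarrow> real) \<times> (nat \<Rightarrow> real)) list" where
  "layers ps = map (\<lambda>(a,b). (mat1 a, vec1 b)) ps @ [(mat1 1, vec1 0)]"

lemma sum_mat1:
  assumes "0 < (n::nat)"
  shows "(\<Sum>i<n. mat1 a j i * w i) = (if j = 0 then a * w 0 else 0)"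
proof -
  have "(\<Sum>i<n. mat1 a j i * w i) = (\<Sum>i<n. if i = 0 then (if j = 0 then a * w 0 else 0) else 0)"
    by (rule sum.cong) (auto simp: mat1_def)
  also have "\<dots> = (if j = 0 then a * w 0 else 0)"
    using assms by (simp add: sum.delta)
  finally show ?thesis .
qed

lemma net_layers:
  "length ns = Suc (length ps) \<Longrightarrow> (\<forall>k\<in>set (n#ns). 0 < k) \<Longrightarrow>
   net_rest rho (n#ns) (layers ps) z = (\<lambda>j. if j = 0 then rho (nchain rho ps (z 0)) else 0)"
proof (induction ps arbitrary: n ns z)
  case Nil
  then obtain m where ns: "ns = [m]" by (cases ns) auto
  have n0: "0 < n" "0 < m" using Nil ns by auto
  show ?case
    using n0 by (auto simp: ns layers_def sum_mat1 vec1_def)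
next
  case (Cons p ps)
  obtain a b where p: "p = (a,b)" by (cases p)
  from Cons.prems obtain m ns' where ns: "ns = m # ns'" by (cases ns) auto
  have n0: "0 < n" "0 < m" using Cons.prems ns by auto
  have lay: "layers (p # ps) = (mat1 a, vec1 b) # layers ps" by (simp add: layers_def p)
  define z' where "z' = (\<lambda>j. if j < m then (\<Sum>i<n. mat1 a j i * rho (z i)) + vec1 b j else 0)"
  have "net_rest rho (n#ns) (layers (p#ps)) z = net_rest rho (m#ns') (layers ps) z'"
    unfolding lay ns z'_def by simp
  also have "\<dots> = (\<lambda>j. if j = 0 then rho (nchain rho ps (z' 0)) else 0)"
    by (rule Cons.IH) (use Cons.prems ns in auto)
  also have "z' 0 = a * rho (z 0) + b"
    using n0 by (simp add: z'_def sum_mat1 vec1_def)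
  finally show ?case by (simp add: p cong: if_cong)
qed

definition netw :: "'d::finite \<Rightarrow> real \<Rightarrow> real \<Rightarrow> (real \<times> real) list \<Rightarrow> 'd network" where
  "netw i0 a1 b1 ps = ((\<lambda>j i. if j = 0 \<and> i = i0 then a1 else 0), vec1 b1, layers ps)"

lemma netw_NN: "length Ns = length ps + 2 \<Longrightarrow> netw i0 a1 b1 ps \<in> NN Ns"
  by (simp add: NN_def netw_def layers_def)

lemma real_netw:
  fixes i0 :: "'d::finite"
  assumes "length Ns = length ps + 2" "\<forall>k\<in>set Ns. 0 < k"
  shows "realization rho Ns (netw i0 a1 b1 ps) x = (\<lambda>j. if j = 0 then rho (nchain rho ps (a1 * x $ i0 + b1)) else 0)"
proof -
  obtain n ns where Ns: "Ns = n # ns" using assms by (cases Ns) auto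
  have n0: "0 < n" using assms Ns by auto
  have s: "(\<Sum>i\<in>UNIV. (if j = 0 \<and> i = i0 then a1 else 0) * x $ i) = (if j = 0 then a1 * x $ i0 else 0)" for j
  proof -
    have "(\<Sum>i\<in>UNIV. (if j = 0 \<and> i = i0 then a1 else 0) * x $ i) = (\<Sum>i\<in>UNIV. if i = i0 then (if j = 0 then a1 * x $ i0 else 0) else 0)"
      by (rule sum.cong) auto
    also have "\<dots> = (if j = 0 then a1 * x $ i0 else 0)" by (simp add: sum.delta)
    finally show ?thesis .
  qed
  show ?thesis
    unfolding realization_def netw_def Ns
    apply (simp only: prod.case)
    apply (subst net_layers)
    using assms Ns n0 s[of 0] by (auto simp: vec1_def)
qed

lemma chain_append: "nchain rho (ps @ [(a,b)]) v = a * rho (nchain rho ps v) + b"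
  by (induction ps arbitrary: v) auto

lemma chain_sep:
  assumes "rho p \<noteq> rho q"
  shows "\<exists>ps. length ps = m \<and> rho (nchain rho ps p) \<noteq> rho (nchain rho ps q)"
proof (induction m)
  case 0
  then show ?case using assms by auto
next
  case (Suc m)
  then obtain ps where ps: "length ps = m" "rho (nchain rho ps p) \<noteq> rho (nchain rho ps q)" by blast
  define a where "a = (p - q) / (rho p - rho q)"
  define b where "b = p - a * rho p"
  have "a * rho p + b = p" by (simp add: b_def)
  moreover have "a * rho q + b = q"
  proof -
    have "a * (rho p - rho q) = p - q" using assms by (simp add: a_def)
    moreover have "a * rho q + b = p - a * (rho p - rho q)" by (simp add: b_def algebra_simps)
    ultimately show ?thesis by simp
  qed
  ultimately show ?case using ps by (intro exI[of _ "(a,b)#ps"]) auto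
qed

lemma chain_cont:
  assumes "continuous_on UNIV rho"
  shows "continuous_on UNIV (nchain rho ps)"
proof (induction ps)
  case Nil
  then show ?case by (simp add: continuous_on_id')
next
  case (Cons p ps)
  obtain a b where p: "p = (a,b)" by (cases p)
  have "continuous_on UNIV (\<lambda>v. a * rho v + b)"
    by (intro continuous_intros assms)
  then have "continuous_on UNIV (\<lambda>v. nchain rho ps (a * rho v + b))"
    by (rule continuous_on_compose2[OF Cons.IH]) auto
  then show ?case by (simp add: p)
qed

lemma exists_u:
  fixes x1 x2 :: "real^'d::finite" and i0 :: 'd
  assumes L: "length Ns \<ge> 2" and pos: "\<forall>k\<in>set Ns. 0 < k"
    and cr: "continuous_on UNIV rho" and pq: "rho p \<noteq> rho q" and x12: "x1 $ i0 \<noteq> x2 $ i0"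
  shows "\<exists>u. continuous_on UNIV u \<and> u x1 \<noteq> u x2 \<and>
     (\<forall>a b. \<exists>Phi\<in>NN Ns. \<forall>x. realization rho Ns Phi x = (\<lambda>j. if j = 0 then rho (a * u x + b) else 0))"
proof (cases "length Ns = 2")
  case True
  show ?thesis
  proof (intro exI conjI allI)
    show "continuous_on UNIV (\<lambda>x::real^'d. x $ i0)" by (intro continuous_intros)
    show "x1 $ i0 \<noteq> x2 $ i0" by (rule x12)
    fix a b
    show "\<exists>Phi\<in>NN Ns. \<forall>x. realization rho Ns Phi x = (\<lambda>j. if j = 0 then rho (a * x $ i0 + b) else 0)"
    proof (rule bexI[of _ "netw i0 a b []"])
      show "netw i0 a b [] \<in> NN Ns" using netw_NN[of Ns "[]" i0 a b] True by simp
      show "\<forall>x. realization rho Ns (netw i0 a b []) x = (\<lambda>j. if j = 0 then rho (a * x $ i0 + b) else 0)"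
        using real_netw[of Ns "[]" rho i0 a b] True pos by (simp cong: if_cong)
    qed
  qed
next
  case False
  with L have L3: "length Ns \<ge> 3" by simp
  obtain ps0 where ps0: "length ps0 = length Ns - 3" "rho (nchain rho ps0 p) \<noteq> rho (nchain rho ps0 q)"
    using chain_sep[of rho p q "length Ns - 3", OF pq] by blast
  define a1 where "a1 = (p - q) / (x1 $ i0 - x2 $ i0)"
  define b1 where "b1 = p - a1 * x1 $ i0"
  have e1: "a1 * x1 $ i0 + b1 = p" by (simp add: b1_def)
  have e2: "a1 * x2 $ i0 + b1 = q"
  proof -
    have "a1 * (x1 $ i0 - x2 $ i0) = p - q" using x12 by (simp add: a1_def)
    moreover have "a1 * x2 $ i0 + b1 = p - a1 * (x1 $ i0 - x2 $ i0)" by (simp add: b1_def algebra_simps)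
    ultimately show ?thesis by simp
  qed
  define u where "u x = rho (nchain rho ps0 (a1 * x $ i0 + b1))" for x :: "real^'d"
  show ?thesis
  proof (intro exI conjI allI)
    have "continuous_on UNIV (\<lambda>x::real^'d. a1 * x $ i0 + b1)" by (intro continuous_intros)
    then have "continuous_on UNIV (\<lambda>x::real^'d. nchain rho ps0 (a1 * x $ i0 + b1))"
      by (rule continuous_on_compose2[OF chain_cont[OF cr]]) auto
    then show "continuous_on UNIV u"
      unfolding u_def by (rule continuous_on_compose2[OF cr]) auto
    show "u x1 \<noteq> u x2" using ps0 e1 e2 by (simp add: u_def)
    fix a b
    have len: "length Ns = length (ps0 @ [(a,b)]) + 2" using ps0 L3 by simp
    show "\<exists>Phi\<in>NN Ns. \<forall>x. realization rho Ns Phi x = (\<lambda>j. if j = 0 then rho (a * u x + b) else 0)"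
      using netw_NN[OF len, of i0 a1 b1] real_netw[OF len pos, of rho i0 a1 b1]
      by (auto simp: chain_append u_def cong: if_cong)
  qed
qed


instantiation "fun" :: (type, real_vector) real_vector
begin
definition scaleR_fun :: "real \<Rightarrow> ('a \<Rightarrow> 'b) \<Rightarrow> 'a \<Rightarrow> 'b" where
  "scaleR_fun r f = (\<lambda>x. r *\<^sub>R f x)"
instance
  by standard (simp_all add: scaleR_fun_def fun_eq_iff scaleR_add_right scaleR_add_left)
end

lemma sum_fun_apply: "(\<Sum>a\<in>A. f a) x = (\<Sum>a\<in>A. f a x)"
  by (induction A rule: infinite_finite_induct) auto

theorem propositionC6:
  fixes rho :: "real \<Rightarrow> real" and Ns :: "nat list" and \<Omega> :: "(real^'d::finite) set"
  assumes "length Ns \<ge> 2"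
    and "\<forall>n\<in>set Ns. n > 0"
    and "continuous_on UNIV rho"
    and "\<exists>x0 D. (rho has_real_derivative D) (at x0) \<and> D \<noteq> 0"
    and "interior \<Omega> \<noteq> {}"
    and "\<not> (\<exists>F. F \<subseteq> RNN rho \<Omega> Ns \<and> infinite F \<and> lin_indep_on \<Omega> F)"
  shows "\<exists>p :: real poly. \<forall>x. rho x = poly p x"
proof -
  note cr = assms(3)
  show ?thesis
  proof (cases "\<exists>p q. rho p \<noteq> rho q")
    case False
    then have "\<forall>x. rho x = poly [:rho 0:] x" by auto
    then show ?thesis by blast
  next
    case True
    then obtain p q where pq: "rho p \<noteq> rho q" by blast
    obtain c0 where "c0 \<in> interior \<Omega>" using assms(5) by blast
    then obtain r where r: "r > 0" "ball c0 r \<subseteq> \<Omega>" using mem_interior by blast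
    obtain i0 :: 'd where True by blast
    define x1 where "x1 = c0"
    define x2 where "x2 = c0 + (r/2) *\<^sub>R axis i0 1"
    have x1b: "x1 \<in> ball c0 r" using r by (simp add: x1_def)
    have x2b: "x2 \<in> ball c0 r" using r by (simp add: x2_def dist_norm)
    have x12: "x1 $ i0 \<noteq> x2 $ i0" using r by (simp add: x1_def x2_def)
    obtain u where ucont: "continuous_on UNIV u" and u12: "u x1 \<noteq> u x2"
      and uG: "\<And>a b. \<exists>Phi\<in>NN Ns. \<forall>x. realization rho Ns Phi x = (\<lambda>j. if j = 0 then rho (a * u x + b) else 0)"
      using exists_u[OF assms(1) assms(2) cr pq x12] by blast
    define \<alpha> where "\<alpha> = min (u x1) (u x2)"
    define \<beta> where "\<beta> = max (u x1) (u x2)"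
    have \<alpha>\<beta>: "\<alpha> < \<beta>" using u12 by (auto simp: \<alpha>_def \<beta>_def)
    have conn: "connected (u ` ball c0 r)"
      by (rule connected_continuous_image) (auto intro: continuous_on_subset[OF ucont])
    have "\<alpha> \<in> u ` ball c0 r" "\<beta> \<in> u ` ball c0 r"
      using x1b x2b by (auto simp: \<alpha>_def \<beta>_def min_def max_def)
    then have T0sub: "{\<alpha>..\<beta>} \<subseteq> u ` ball c0 r"
      using connected_contains_Icc[OF conn] by blast
    define T0 where "T0 = {\<alpha>..\<beta>}"
    have infT0: "infinite T0" using \<alpha>\<beta> by (simp add: T0_def)
    have "\<forall>t\<in>T0. \<exists>x\<in>ball c0 r. u x = t" using T0sub T0_def by force
    then obtain xp where xp: "\<And>t. t \<in> T0 \<Longrightarrow> xp t \<in> ball c0 r \<and> u (xp t) = t" by metis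
    define R where "R = RNN rho \<Omega> Ns"
    have Rvan: "\<And>g x j. g \<in> R \<Longrightarrow> x \<notin> \<Omega> \<Longrightarrow> g x j = 0" by (auto simp: R_def RNN_def)
    define G where "G a b = (\<lambda>x. if x \<in> \<Omega> then (\<lambda>j::nat. if j = 0 then rho (a * u x + b) else 0) else (\<lambda>_. 0))" for a b
    have GR: "G a b \<in> R" for a b
    proof -
      obtain Phi where Phi: "Phi \<in> NN Ns" "\<forall>x. realization rho Ns Phi x = (\<lambda>j. if j = 0 then rho (a * u x + b) else 0)"
        using uG by blast
      have "G a b = (\<lambda>x. if x \<in> \<Omega> then realization rho Ns Phi x else (\<lambda>_. 0))"
        using Phi(2) by (simp add: G_def cong: if_cong)
      then show ?thesis unfolding R_def RNN_def using Phi(1) by blast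
    qed
    have indep_lin: "lin_indep_on \<Omega> F" if FR: "F \<subseteq> R" and Fi: "independent F" for F
    proof (unfold lin_indep_on_def, intro allI impI)
      fix Gs :: "(real^'d \<Rightarrow> nat \<Rightarrow> real) set" and c
      assume h: "finite Gs \<and> Gs \<subseteq> F \<and> (\<forall>x\<in>\<Omega>. \<forall>j. (\<Sum>g\<in>Gs. c g * g x j) = 0)"
      have "(\<Sum>g\<in>Gs. c g *\<^sub>R g) = 0"
      proof (rule ext, rule ext)
        fix x j
        have "(\<Sum>g\<in>Gs. c g *\<^sub>R g) x j = (\<Sum>g\<in>Gs. c g * g x j)"
          by (simp add: sum_fun_apply scaleR_fun_def)
        also have "\<dots> = 0"
        proof (cases "x \<in> \<Omega>")
          case True then show ?thesis using h by auto
        next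
          case False then show ?thesis using h FR Rvan by (auto intro!: sum.neutral)
        qed
        finally show "(\<Sum>g\<in>Gs. c g *\<^sub>R g) x j = 0 x j" by simp
      qed
      then show "\<forall>g\<in>Gs. c g = 0" using Fi h unfolding independent_explicit_finite_subsets by blast
    qed
    have finind: "finite F" if "F \<subseteq> R" "independent F" for F
      using assms(6) indep_lin[OF that] that(1) unfolding R_def by blast
    obtain Bs where Bs: "Bs \<subseteq> R" "independent Bs" "R \<subseteq> span Bs"
      using maximal_independent_subset[of R] by blast
    have finB: "finite Bs" using finind Bs by blast
    define psi :: "real \<Rightarrow> (real^'d \<Rightarrow> nat \<Rightarrow> real) \<Rightarrow> real"
      where "psi t = (\<lambda>g. if g \<in> Bs then g (xp t) 0 else 0)" for t
    define chh :: "(real^'d \<Rightarrow> nat \<Rightarrow> real) \<Rightarrow> (real^'d \<Rightarrow> nat \<Rightarrow> real) \<Rightarrow> real"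
      where "chh g = (\<lambda>h. if h = g then 1 else 0)" for g
    have psispan: "psi t \<in> span (chh ` Bs)" for t
    proof -
      have "psi t = (\<Sum>g\<in>Bs. (g (xp t) 0) *\<^sub>R chh g)"
      proof
        fix h
        have "(\<Sum>g\<in>Bs. (g (xp t) 0) *\<^sub>R chh g) h = (\<Sum>g\<in>Bs. if g = h then h (xp t) 0 else 0)"
          by (simp add: sum_fun_apply scaleR_fun_def chh_def) (rule sum.cong, auto)
        also have "\<dots> = psi t h" using finB by (simp add: psi_def sum.delta)
        finally show "psi t h = (\<Sum>g\<in>Bs. (g (xp t) 0) *\<^sub>R chh g) h" by simp
      qed
      also have "\<dots> \<in> span (chh ` Bs)" by (intro span_sum span_scale span_base imageI)
      finally show ?thesis .
    qed
    obtain \<Lambda> cc where \<Lambda>: "finite \<Lambda>" "\<Lambda> \<subseteq> T0" "\<exists>t\<in>\<Lambda>. cc t \<noteq> 0"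
      and rel0: "\<And>g. g \<in> Bs \<Longrightarrow> (\<Sum>t\<in>\<Lambda>. cc t * g (xp t) 0) = 0"
    proof (cases "inj_on psi T0")
      case True
      have "infinite (psi ` T0)" using True infT0 finite_imageD by blast
      then have "dependent (psi ` T0)"
        using independent_span_bound[of "chh ` Bs" "psi ` T0"] finB psispan by auto
      then have "\<exists>S w. finite S \<and> S \<subseteq> psi ` T0 \<and> (\<Sum>v\<in>S. w v *\<^sub>R v) = 0 \<and> (\<exists>v\<in>S. w v \<noteq> 0)"
        unfolding dependent_explicit .
      then obtain S where "\<exists>w. finite S \<and> S \<subseteq> psi ` T0 \<and> (\<Sum>v\<in>S. w v *\<^sub>R v) = 0 \<and> (\<exists>v\<in>S. w v \<noteq> 0)"
        by (rule exE)
      then obtain w where S0: "finite S \<and> S \<subseteq> psi ` T0 \<and> (\<Sum>v\<in>S. w v *\<^sub>R v) = 0 \<and> (\<exists>v\<in>S. w v \<noteq> 0)"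
        by (rule exE)
      have S: "finite S" "S \<subseteq> psi ` T0" "\<exists>v\<in>S. w v \<noteq> 0" "(\<Sum>v\<in>S. w v *\<^sub>R v) = 0"
        using S0 by simp_all
      define \<Lambda> where "\<Lambda> = {t\<in>T0. psi t \<in> S}"
      have S\<Lambda>: "S = psi ` \<Lambda>" using S(2) by (auto simp: \<Lambda>_def)
      have inj\<Lambda>: "inj_on psi \<Lambda>" using True by (rule inj_on_subset) (auto simp: \<Lambda>_def)
      have fin\<Lambda>: "finite \<Lambda>" using S(1) S\<Lambda> inj\<Lambda> finite_imageD by blast
      have sumeq: "(\<Sum>t\<in>\<Lambda>. w (psi t) *\<^sub>R psi t) = 0"
        using S(4) S\<Lambda> sum.reindex[OF inj\<Lambda>, of "\<lambda>v. w v *\<^sub>R v"] by simp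
      show ?thesis
      proof (rule that[of \<Lambda> "\<lambda>t. w (psi t)"])
        show "finite \<Lambda>" by (rule fin\<Lambda>)
        show "\<Lambda> \<subseteq> T0" by (auto simp: \<Lambda>_def)
        show "\<exists>t\<in>\<Lambda>. w (psi t) \<noteq> 0" using S(3) S\<Lambda> by auto
        fix g assume g: "g \<in> Bs"
        have "(\<Sum>t\<in>\<Lambda>. w (psi t) *\<^sub>R psi t) g = 0" using sumeq by simp
        then show "(\<Sum>t\<in>\<Lambda>. w (psi t) * g (xp t) 0) = 0"
          using g by (simp add: sum_fun_apply scaleR_fun_def psi_def)
      qed
    next
      case False
      then obtain s t where st: "s \<in> T0" "t \<in> T0" "s \<noteq> t" "psi s = psi t"
        unfolding inj_on_def by blast
      show ?thesis
      proof (rule that[of "{s,t}" "\<lambda>x. if x = s then 1 else -1"])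
        show "finite {s,t}" by simp
        show "{s,t} \<subseteq> T0" using st by auto
        show "\<exists>x\<in>{s,t}. (if x = s then 1 else -1::real) \<noteq> 0" by auto
        fix g assume g: "g \<in> Bs"
        have "psi s g = psi t g" using st by simp
        then have "g (xp s) 0 = g (xp t) 0" using g by (simp add: psi_def)
        then show "(\<Sum>x\<in>{s,t}. (if x = s then 1 else -1) * g (xp x) 0) = 0" using st(3) by simp
      qed
    qed
    define W where "W = {g :: real^'d \<Rightarrow> nat \<Rightarrow> real. (\<Sum>t\<in>\<Lambda>. cc t * g (xp t) 0) = 0}"
    have scl: "(\<Sum>t\<in>\<Lambda>. cc t * (c * h t)) = c * (\<Sum>t\<in>\<Lambda>. cc t * h t)" for c and h :: "real \<Rightarrow> real"
      by (simp add: sum_distrib_left mult_ac)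
    have subW: "subspace W"
      unfolding subspace_def W_def
      by (simp add: sum.distrib distrib_left scaleR_fun_def scl[of _ "\<lambda>t. _ (xp t) 0"])
    have "span Bs \<subseteq> W" using span_minimal[OF _ subW] rel0 W_def by auto
    then have RW: "R \<subseteq> W" using Bs(3) by blast
    have relrho: "\<forall>a b. (\<Sum>t\<in>\<Lambda>. cc t * rho (a*t+b)) = 0"
    proof (intro allI)
      fix a b
      have "G a b \<in> W" using GR RW by blast
      then have "(\<Sum>t\<in>\<Lambda>. cc t * G a b (xp t) 0) = 0" by (simp add: W_def)
      moreover have "G a b (xp t) 0 = rho (a*t+b)" if "t \<in> \<Lambda>" for t
      proof -
        have "t \<in> T0" using that \<Lambda>(2) by blast
        then have "xp t \<in> \<Omega>" "u (xp t) = t" using xp r(2) by blast+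
        then show ?thesis by (simp add: G_def)
      qed
      ultimately show "(\<Sum>t\<in>\<Lambda>. cc t * rho (a*t+b)) = 0" by (metis (no_types, lifting) sum.cong)
    qed
    obtain t0 where t0: "t0 \<in> \<Lambda>" "cc t0 \<noteq> 0" using \<Lambda>(3) by blast
    show ?thesis using core_poly[OF \<Lambda>(1) t0 cr relrho] .
  qed
qed


end
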